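(* There exists a locally finite group $K$ with a proper left invariant metric $d_K$ such that $\operatorname{asdim}_{AN}(K,d_K)=\infty$ and all asymptotic cones of $(K,d_K)$ are ultrametric.
   Context: A group is locally finite if each of its finitely generated subgroups is finite. A metric $d_G$ on a group $G$ is proper left invariant if $d_G(gh,gk)=d_G(h,k)$ for all $g,h,k\in G$ and for every $R>0$ only finitely many $g$ satisfy $d_G(1,g)\le R$. $\operatorname{asdim}_{AN}(X)$ is the least $n$ such that for some constants $C>0,k$ and every $s>0$ there is a cover $\{\mathcal U_0,\dots,\mathcal U_n\}$ of $X$ whose members have $s$-scale connected components (classes of "joined by a chain inside the set with consecutive distances $<s$") of diameter $\le Cs+k$; $\infty$ if no such $n$. Asymptotic cone $\operatorname{Cone}_\omega(X,c,d)$: for a non-principal ultrafilter $\omega$, sequence $c$ in $X$, positive reals $d_n$ with $\lim_\omega d_n=\infty$, the sequences $(x_n)$ with $\lim_\omega \rho(x_n,c_n)/d_n<\infty$, pseudometric $\lim_\omega\rho(x_n,y_n)/d_n$, modulo distance zero. Ultrametric: $\rho(x,y)\le\max\{\rho(x,z),\rho(y,z)\}$. *)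

theory Defs
  imports "HOL-Analysis.Analysis" "HOL-Algebra.Generated_Groups"
begin

definition locally_finite_group :: "('a, 'b) monoid_scheme \<Rightarrow> bool" where
  "locally_finite_group G \<longleftrightarrow> group G \<and>
     (\<forall>S. S \<subseteq> carrier G \<and> finite S \<longrightarrow> finite (generate G S))"

definition metric_on :: "'a set \<Rightarrow> ('a \<Rightarrow> 'a \<Rightarrow> real) \<Rightarrow> bool" where
  "metric_on X d \<longleftrightarrow>
     (\<forall>x\<in>X. \<forall>y\<in>X. 0 \<le> d x y \<and> (d x y = 0 \<longleftrightarrow> x = y) \<and> d x y = d y x) \<and>
     (\<forall>x\<in>X. \<forall>y\<in>X. \<forall>z\<in>X. d x z \<le> d x y + d y z)"

definition proper_left_invariant_metric :: "('a, 'b) monoid_scheme \<Rightarrow> ('a \<Rightarrow> 'a \<Rightarrow> real) \<Rightarrow> bool" where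
  "proper_left_invariant_metric G d \<longleftrightarrow> metric_on (carrier G) d \<and>
     (\<forall>g\<in>carrier G. \<forall>h\<in>carrier G. \<forall>k\<in>carrier G.
        d (g \<otimes>\<^bsub>G\<^esub> h) (g \<otimes>\<^bsub>G\<^esub> k) = d h k) \<and>
     (\<forall>R. finite {g \<in> carrier G. d \<one>\<^bsub>G\<^esub> g \<le> R})"

definition s_chain :: "('a \<Rightarrow> 'a \<Rightarrow> real) \<Rightarrow> real \<Rightarrow> 'a set \<Rightarrow> 'a \<Rightarrow> 'a \<Rightarrow> bool" where
  "s_chain d s U x y \<longleftrightarrow> (\<exists>xs. xs \<noteq> [] \<and> hd xs = x \<and> last xs = y \<and> set xs \<subseteq> U \<and>
     (\<forall>i. Suc i < length xs \<longrightarrow> d (xs ! i) (xs ! Suc i) < s))"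

definition asdim_AN_le :: "'a set \<Rightarrow> ('a \<Rightarrow> 'a \<Rightarrow> real) \<Rightarrow> nat \<Rightarrow> bool" where
  "asdim_AN_le X d n \<longleftrightarrow> (\<exists>C k. C > 0 \<and> (\<forall>s>0. \<exists>U :: nat \<Rightarrow> 'a set.
     (\<forall>i\<le>n. U i \<subseteq> X) \<and> (\<Union>i\<le>n. U i) = X \<and>
     (\<forall>i\<le>n. \<forall>x\<in>U i. \<forall>y\<in>U i. s_chain d s (U i) x y \<longrightarrow> d x y \<le> C * s + k)))"

definition asdim_AN_infinite :: "'a set \<Rightarrow> ('a \<Rightarrow> 'a \<Rightarrow> real) \<Rightarrow> bool" where
  "asdim_AN_infinite X d \<longleftrightarrow> \<not> (\<exists>n. asdim_AN_le X d n)"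

definition nonprincipal_ultrafilter :: "nat filter \<Rightarrow> bool" where
  "nonprincipal_ultrafilter F \<longleftrightarrow> F \<noteq> bot \<and>
     (\<forall>P. eventually P F \<or> eventually (\<lambda>n. \<not> P n) F) \<and>
     (\<forall>m. eventually (\<lambda>n. n \<noteq> m) F)"

text \<open>Sequences defining points of Cone_omega(X,c,r).\<close>
definition cone_seq :: "'a set \<Rightarrow> ('a \<Rightarrow> 'a \<Rightarrow> real) \<Rightarrow> nat filter \<Rightarrow> (nat \<Rightarrow> 'a) \<Rightarrow> (nat \<Rightarrow> real) \<Rightarrow> (nat \<Rightarrow> 'a) \<Rightarrow> bool" where
  "cone_seq X d F c r x \<longleftrightarrow> (\<forall>n. x n \<in> X) \<and>
     (\<exists>M. eventually (\<lambda>n. d (x n) (c n) / r n \<le> M) F)"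

definition cone_dist :: "('a \<Rightarrow> 'a \<Rightarrow> real) \<Rightarrow> nat filter \<Rightarrow> (nat \<Rightarrow> real) \<Rightarrow> (nat \<Rightarrow> 'a) \<Rightarrow> (nat \<Rightarrow> 'a) \<Rightarrow> real" where
  "cone_dist d F r x y = Lim F (\<lambda>n. d (x n) (y n) / r n)"

text \<open>The cone is ultrametric (checked on the pseudometric, equivalently on the quotient).\<close>
definition cone_ultrametric :: "'a set \<Rightarrow> ('a \<Rightarrow> 'a \<Rightarrow> real) \<Rightarrow> nat filter \<Rightarrow> (nat \<Rightarrow> 'a) \<Rightarrow> (nat \<Rightarrow> real) \<Rightarrow> bool" where
  "cone_ultrametric X d F c r \<longleftrightarrow>
     (\<forall>x y z. cone_seq X d F c r x \<and> cone_seq X d F c r y \<and> cone_seq X d F c r z \<longrightarrow>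
        cone_dist d F r x y \<le> max (cone_dist d F r x z) (cone_dist d F r y z))"

definition all_cones_ultrametric :: "'a set \<Rightarrow> ('a \<Rightarrow> 'a \<Rightarrow> real) \<Rightarrow> bool" where
  "all_cones_ultrametric X d \<longleftrightarrow>
     (\<forall>F c r. nonprincipal_ultrafilter F \<and> (\<forall>n. c n \<in> X) \<and> (\<forall>n. r n > 0) \<and>
        filterlim r at_top F \<longrightarrow> cone_ultrametric X d F c r)"

end

theory Submission
  imports Defs "HOL-Library.Nat_Bijection"
begin


definition sd :: "'a set \<Rightarrow> 'a set \<Rightarrow> 'a set" where
  "sd A B = (A - B) \<union> (B - A)"

lemma sd_simps: "sd A A = {}" "sd {} A = A" "sd A {} = A" "sd A B = sd B A"
  "sd (sd A B) C = sd A (sd B C)" "sd (sd g h) (sd g k) = sd h k"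
  "sd (sd X Y) (sd Y Z) = sd X Z"
  by (auto simp: sd_def)

lemma finite_sd: "finite A \<Longrightarrow> finite B \<Longrightarrow> finite (sd A B)"
  by (auto simp: sd_def)

definition Kgrp :: "nat monoid" where
  "Kgrp = \<lparr>carrier = UNIV, mult = (\<lambda>x y. set_encode (sd (set_decode x) (set_decode y))), one = 0\<rparr>"

lemma Kgrp_simps [simp]: "carrier Kgrp = UNIV" "one Kgrp = 0"
  "mult Kgrp x y = set_encode (sd (set_decode x) (set_decode y))"
  by (simp_all add: Kgrp_def)

lemma dec_mult [simp]: "set_decode (set_encode (sd (set_decode x) (set_decode y))) = sd (set_decode x) (set_decode y)"
  by (simp add: finite_sd)

lemma group_K: "group Kgrp"
proof (rule groupI)
  fix x y z :: nat
  show "x \<otimes>\<^bsub>Kgrp\<^esub> y \<otimes>\<^bsub>Kgrp\<^esub> z = x \<otimes>\<^bsub>Kgrp\<^esub> (y \<otimes>\<^bsub>Kgrp\<^esub> z)"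
    by (simp, rule arg_cong[where f=set_encode], auto simp: sd_def)
next
  fix x :: nat
  show "\<one>\<^bsub>Kgrp\<^esub> \<otimes>\<^bsub>Kgrp\<^esub> x = x" by (simp add: sd_simps)
  show "\<exists>y\<in>carrier Kgrp. y \<otimes>\<^bsub>Kgrp\<^esub> x = \<one>\<^bsub>Kgrp\<^esub>"
    by (rule bexI[of _ x]) (simp_all add: sd_simps)
qed auto

lemma inv_K [simp]: "inv\<^bsub>Kgrp\<^esub> x = x"
  by (rule group.inv_equality[OF group_K]) (simp_all add: sd_simps)

lemma locfin_K: "locally_finite_group Kgrp"
  unfolding locally_finite_group_def
proof (intro conjI allI impI group_K)
  fix S :: "nat set" assume "S \<subseteq> carrier Kgrp \<and> finite S"
  then have fS: "finite S" by simp
  define W where "W = \<Union> (set_decode ` S)"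
  have fW: "finite W" using fS by (simp add: W_def)
  have "set_decode g \<subseteq> W" if "g \<in> generate Kgrp S" for g
    using that
  proof (induction rule: generate.induct)
    case one then show ?case by simp
  next
    case (incl h) then show ?case by (auto simp: W_def)
  next
    case (inv h) then show ?case by (auto simp: W_def)
  next
    case (eng h1 h2) then show ?case by (auto simp: sd_def)
  qed
  then have "generate Kgrp S \<subseteq> set_encode ` Pow W"
    by (metis PowI image_eqI set_decode_inverse subsetI)
  then show "finite (generate Kgrp S)" using fW by (meson finite_Pow_iff finite_imageI finite_subset)
qed



definition nP :: "nat \<Rightarrow> nat" where
  "nP J = nat \<lceil>exp (real (2*J*J+4*J+1))\<rceil>"

definition bitc :: "nat \<Rightarrow> nat \<Rightarrow> nat \<Rightarrow> nat" where
  "bitc J i t = prod_encode (J, prod_encode (i, t))"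

definition blk :: "nat \<Rightarrow> nat" where
  "blk e = (case prod_decode e of (J, q) \<Rightarrow> (case prod_decode q of (i, t) \<Rightarrow>
      if i \<le> J \<and> t < nP J then J else e))"

lemma blk_bit: "i \<le> J \<Longrightarrow> t < nP J \<Longrightarrow> blk (bitc J i t) = J"
  by (simp add: blk_def bitc_def)

lemma bitc_inj: "bitc J i t = bitc J' i' t' \<longleftrightarrow> J = J' \<and> i = i' \<and> t = t'"
  unfolding bitc_def by (metis prod_encode_inverse prod.inject)

lemma finite_blk_le: "finite {e. blk e \<le> R}"
proof -
  have "{e. blk e \<le> R} \<subseteq> {..R} \<union> (\<Union>J\<le>R. \<Union>i\<le>J. bitc J i ` {..<nP J})"
  proof
    fix e assume "e \<in> {e. blk e \<le> R}"
    then have e: "blk e \<le> R" by simp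
    obtain J q where Jq: "prod_decode e = (J, q)" by (cases "prod_decode e")
    obtain i t where it: "prod_decode q = (i, t)" by (cases "prod_decode q")
    have eq: "e = bitc J i t"
      by (metis Jq it bitc_def prod_decode_inverse)
    show "e \<in> {..R} \<union> (\<Union>J\<le>R. \<Union>i\<le>J. bitc J i ` {..<nP J})"
    proof (cases "i \<le> J \<and> t < nP J")
      case True
      then have "blk e = J" using eq blk_bit by metis
      then show ?thesis using True e eq by auto
    next
      case False
      then have "blk e = e" using Jq it by (auto simp: blk_def)
      then show ?thesis using e by auto
    qed
  qed
  then show ?thesis by (rule finite_subset) auto
qed

definition fb :: "nat set \<Rightarrow> nat \<Rightarrow> real" where
  "fb A J = (if A \<inter> {e. blk e = J} = {} then 0
     else real J + 1 + ln (1 + real (card (A \<inter> {e. blk e = J}))))"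

definition Nm :: "nat set \<Rightarrow> real" where
  "Nm A = Max (insert 0 (fb A ` blk ` A))"

lemma fb_nonneg: "0 \<le> fb A J"
  by (simp add: fb_def)

lemma fb_zero: "J \<notin> blk ` A \<Longrightarrow> fb A J = 0"
  by (auto simp: fb_def)

lemma Nm_ge: "finite A \<Longrightarrow> fb A J \<le> Nm A"
  unfolding Nm_def
  by (cases "J \<in> blk ` A") (auto simp: fb_zero intro!: Max_ge)

lemma Nm_ge0: "finite A \<Longrightarrow> 0 \<le> Nm A"
  unfolding Nm_def by (auto intro!: Max_ge)

lemma Nm_le: "finite A \<Longrightarrow> 0 \<le> R \<Longrightarrow> (\<And>J. fb A J \<le> R) \<Longrightarrow> Nm A \<le> R"
  unfolding Nm_def by (auto intro!: Max.boundedI)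

lemma Nm_empty [simp]: "Nm {} = 0"
  by (simp add: Nm_def)

lemma fb_mem: "e \<in> A \<Longrightarrow> real (blk e) + 1 \<le> fb A (blk e)"
  by (auto simp: fb_def)

lemma Nm_pos: "finite A \<Longrightarrow> A \<noteq> {} \<Longrightarrow> 0 < Nm A"
proof -
  assume "finite A" "A \<noteq> {}"
  then obtain e where "e \<in> A" by auto
  then have "real (blk e) + 1 \<le> Nm A" using fb_mem Nm_ge \<open>finite A\<close> order_trans by blast
  then show ?thesis by linarith
qed

lemma ln_sum_le: fixes a b :: real shows "0 \<le> a \<Longrightarrow> 0 \<le> b \<Longrightarrow> ln (1 + a + b) \<le> ln (1 + a) + ln (1 + b)"
proof -
  assume "0 \<le> a" "0 \<le> b"
  then have "1 + a + b \<le> (1 + a) * (1 + b)" using mult_nonneg_nonneg[of a b] by (simp add: algebra_simps)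
  then have "ln (1 + a + b) \<le> ln ((1 + a) * (1 + b))" using \<open>0 \<le> a\<close> \<open>0 \<le> b\<close> by simp
  also have "\<dots> = ln (1 + a) + ln (1 + b)" using \<open>0 \<le> a\<close> \<open>0 \<le> b\<close> by (simp add: ln_mult)
  finally show ?thesis .
qed

lemma ln_sum_le2: fixes a b :: real shows "0 \<le> a \<Longrightarrow> 0 \<le> b \<Longrightarrow> ln (1 + a + b) \<le> max (ln (1 + a)) (ln (1 + b)) + ln 2"
proof -
  assume "0 \<le> a" "0 \<le> b"
  have "1 + a + b \<le> 2 * (1 + max a b)" by simp
  then have "ln (1 + a + b) \<le> ln (2 * (1 + max a b))" using \<open>0 \<le> a\<close> \<open>0 \<le> b\<close> by simp
  also have "\<dots> = ln 2 + ln (1 + max a b)" using \<open>0 \<le> a\<close> \<open>0 \<le> b\<close> by (subst ln_mult) (auto simp: max_def)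
  also have "ln (1 + max a b) = max (ln (1 + a)) (ln (1 + b))"
    using \<open>0 \<le> a\<close> \<open>0 \<le> b\<close> by (auto simp: max_def)
  finally show ?thesis by simp
qed

lemma fb_sd:
  assumes "finite A" "finite B"
  shows "fb (sd A B) J \<le> fb A J + fb B J \<and> fb (sd A B) J \<le> max (fb A J) (fb B J) + ln 2"
proof -
  define a where "a = A \<inter> {e. blk e = J}"
  define b where "b = B \<inter> {e. blk e = J}"
  have c: "sd A B \<inter> {e. blk e = J} = sd a b" by (auto simp: a_def b_def sd_def)
  have fa: "finite a" "finite b" using assms by (auto simp: a_def b_def)
  have l2: "0 < ln (2::real)" by simp
  show ?thesis
  proof (cases "sd a b = {}")
    case True
    then have "fb (sd A B) J = 0" using c by (simp add: fb_def)
    then show ?thesis using fb_nonneg[of A J] fb_nonneg[of B J] l2 by auto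
  next
    case ne: False
    show ?thesis
    proof (cases "a = {}")
      case True
      then have "fb (sd A B) J = fb B J" using c by (simp add: fb_def b_def sd_simps)
      moreover have "fb B J \<le> max (fb A J) (fb B J)" by simp
      ultimately show ?thesis using fb_nonneg[of A J] l2 by linarith
    next
      case an: False
      show ?thesis
      proof (cases "b = {}")
        case True
        then have "fb (sd A B) J = fb A J" using c by (simp add: fb_def a_def sd_simps)
        moreover have "fb A J \<le> max (fb A J) (fb B J)" by simp
        ultimately show ?thesis using fb_nonneg[of B J] l2 by linarith
      next
        case bn: False
        have cd: "card (sd a b) \<le> card a + card b"
          unfolding sd_def using fa by (meson card_Un_le card_mono Diff_subset le_trans add_mono)
        have "ln (1 + real (card (sd a b))) \<le> ln (1 + real (card a) + real (card b))"
          using cd by simp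
        then have h1: "ln (1 + real (card (sd a b))) \<le> ln (1 + real (card a)) + ln (1 + real (card b))"
          and h2: "ln (1 + real (card (sd a b))) \<le> max (ln (1 + real (card a))) (ln (1 + real (card b))) + ln 2"
          using ln_sum_le[of "real (card a)" "real (card b)"] ln_sum_le2[of "real (card a)" "real (card b)"]
          by linarith+
        have e1: "fb (sd A B) J = real J + 1 + ln (1 + real (card (sd a b)))" using c ne by (simp add: fb_def)
        have e2: "fb A J = real J + 1 + ln (1 + real (card a))" using an by (simp add: fb_def a_def)
        have e3: "fb B J = real J + 1 + ln (1 + real (card b))" using bn by (simp add: fb_def b_def)
        have "ln (1 + real (card b)) \<ge> 0" "ln (1 + real (card a)) \<ge> 0" by simp_all
        then show ?thesis using h1 h2 unfolding e1 e2 e3 by (auto simp: max_def)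
      qed
    qed
  qed
qed

lemma Nm_sd:
  assumes "finite A" "finite B"
  shows "Nm (sd A B) \<le> Nm A + Nm B" "Nm (sd A B) \<le> max (Nm A) (Nm B) + ln 2"
proof -
  have f: "finite (sd A B)" using assms by (rule finite_sd)
  show "Nm (sd A B) \<le> Nm A + Nm B"
  proof (rule Nm_le[OF f])
    show "0 \<le> Nm A + Nm B" using Nm_ge0 assms by (simp add: add_nonneg_nonneg)
    fix J show "fb (sd A B) J \<le> Nm A + Nm B"
      using fb_sd[OF assms, of J] Nm_ge[OF assms(1), of J] Nm_ge[OF assms(2), of J] by linarith
  qed
  show "Nm (sd A B) \<le> max (Nm A) (Nm B) + ln 2"
  proof (rule Nm_le[OF f])
    show "0 \<le> max (Nm A) (Nm B) + ln 2" using Nm_ge0[OF assms(1)] by (simp add: max_def)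
    fix J show "fb (sd A B) J \<le> max (Nm A) (Nm B) + ln 2"
    proof -
      have "max (fb A J) (fb B J) \<le> max (Nm A) (Nm B)"
        using Nm_ge[OF assms(1), of J] Nm_ge[OF assms(2), of J] by (rule max.mono)
      then show ?thesis using fb_sd[OF assms, of J] by linarith
    qed
  qed
qed

definition dK :: "nat \<Rightarrow> nat \<Rightarrow> real" where
  "dK x y = Nm (sd (set_decode x) (set_decode y))"

lemma dK_quasi: "dK x y \<le> max (dK x z) (dK y z) + ln 2"
proof -
  have "dK x y = Nm (sd (sd (set_decode x) (set_decode z)) (sd (set_decode z) (set_decode y)))"
    unfolding dK_def by (rule arg_cong[where f=Nm]) (auto simp: sd_def)
  also have "\<dots> \<le> max (dK x z) (dK z y) + ln 2"
    unfolding dK_def by (rule Nm_sd) (simp_all add: finite_sd)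
  finally show ?thesis by (simp add: dK_def sd_simps(4))
qed

lemma plim_K: "proper_left_invariant_metric Kgrp dK"
  unfolding proper_left_invariant_metric_def metric_on_def
proof (intro conjI ballI allI)
  fix x y z :: nat
  show "0 \<le> dK x y" by (simp add: dK_def Nm_ge0 finite_sd)
  show "(dK x y = 0) = (x = y)"
  proof
    assume "dK x y = 0"
    then have "sd (set_decode x) (set_decode y) = {}"
      using Nm_pos[of "sd (set_decode x) (set_decode y)"] by (auto simp: dK_def finite_sd)
    then have "set_decode x = set_decode y" by (auto simp: sd_def)
    then show "x = y" by (metis set_decode_inverse)
  qed (simp add: dK_def sd_simps)
  show "dK x y = dK y x" by (simp add: dK_def sd_simps)
  have "dK x z = Nm (sd (sd (set_decode x) (set_decode y)) (sd (set_decode y) (set_decode z)))"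
    unfolding dK_def by (rule arg_cong[where f=Nm]) (auto simp: sd_def)
  also have "\<dots> \<le> dK x y + dK y z"
    unfolding dK_def by (rule Nm_sd) (simp_all add: finite_sd)
  finally show "dK x z \<le> dK x y + dK y z" .
next
  fix g h k :: nat
  show "dK (g \<otimes>\<^bsub>Kgrp\<^esub> h) (g \<otimes>\<^bsub>Kgrp\<^esub> k) = dK h k"
    unfolding dK_def Kgrp_simps dec_mult sd_simps(6) ..
next
  fix R :: real
  have "{g \<in> carrier Kgrp. dK \<one>\<^bsub>Kgrp\<^esub> g \<le> R} \<subseteq> set_encode ` Pow {e. blk e \<le> nat \<lceil>R\<rceil>}"
  proof
    fix g assume "g \<in> {g \<in> carrier Kgrp. dK \<one>\<^bsub>Kgrp\<^esub> g \<le> R}"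
    then have g: "Nm (set_decode g) \<le> R" by (simp add: dK_def sd_simps)
    have "set_decode g \<subseteq> {e. blk e \<le> nat \<lceil>R\<rceil>}"
    proof
      fix e assume "e \<in> set_decode g"
      then have "real (blk e) + 1 \<le> R" using fb_mem Nm_ge[of "set_decode g" "blk e"] g by force
      then show "e \<in> {e. blk e \<le> nat \<lceil>R\<rceil>}" by simp linarith
    qed
    then show "g \<in> set_encode ` Pow {e. blk e \<le> nat \<lceil>R\<rceil>}"
      by (metis PowI image_eqI set_decode_inverse)
  qed
  then show "finite {g \<in> carrier Kgrp. dK \<one>\<^bsub>Kgrp\<^esub> g \<le> R}"
    by (rule finite_subset) (simp add: finite_blk_le)
qed



lemma dK_facts: "0 \<le> dK x y" "dK x y = dK y x" "dK x z \<le> dK x y + dK y z"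
  using plim_K unfolding proper_left_invariant_metric_def metric_on_def by auto

lemma ultra_conv:
  fixes f :: "nat \<Rightarrow> real"
  assumes U: "nonprincipal_ultrafilter F" and ev: "eventually (\<lambda>n. 0 \<le> f n \<and> f n \<le> B) F"
  shows "\<exists>L. (f \<longlongrightarrow> L) F"
proof -
  have Fnb: "F \<noteq> bot" and ult: "\<And>P. eventually P F \<or> eventually (\<lambda>n. \<not> P n) F"
    using U by (auto simp: nonprincipal_ultrafilter_def)
  define S where "S = {t. eventually (\<lambda>n. t \<le> f n) F}"
  have S0: "0 \<in> S" using ev unfolding S_def by (auto elim: eventually_mono)
  have Sb: "t \<le> B" if "t \<in> S" for t
  proof (rule ccontr)
    assume "\<not> t \<le> B"
    have "eventually (\<lambda>n. t \<le> f n \<and> 0 \<le> f n \<and> f n \<le> B) F"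
      using that ev unfolding S_def by (auto intro: eventually_conj)
    then have "eventually (\<lambda>n. False) F" using \<open>\<not> t \<le> B\<close> by (auto elim: eventually_mono)
    then show False using Fnb by simp
  qed
  have bdd: "bdd_above S" using Sb by (intro bdd_aboveI[where M=B]) auto
  define L where "L = Sup S"
  have "(f \<longlongrightarrow> L) F"
  proof (rule order_tendstoI)
    fix y assume "y < L"
    then obtain t where "t \<in> S" "y < t" using less_cSup_iff[of S y] S0 bdd by (auto simp: L_def)
    then show "eventually (\<lambda>n. y < f n) F" unfolding S_def by (auto elim: eventually_mono)
  next
    fix y assume "L < y"
    define z where "z = (L + y) / 2"
    have "z \<notin> S"
    proof
      assume "z \<in> S" then have "z \<le> L" unfolding L_def using bdd by (rule cSup_upper)
      then show False using \<open>L < y\<close> by (simp add: z_def)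
    qed
    then have "eventually (\<lambda>n. \<not> z \<le> f n) F" using ult[of "\<lambda>n. z \<le> f n"] by (auto simp: S_def)
    then show "eventually (\<lambda>n. f n < y) F" using \<open>L < y\<close> by (auto simp: z_def elim: eventually_mono)
  qed
  then show ?thesis by blast
qed

lemma cone_K: "all_cones_ultrametric UNIV dK"
  unfolding all_cones_ultrametric_def cone_ultrametric_def
proof (intro allI impI)
  fix F :: "nat filter" and c :: "nat \<Rightarrow> nat" and r :: "nat \<Rightarrow> real" and x y z :: "nat \<Rightarrow> nat"
  assume A: "nonprincipal_ultrafilter F \<and> (\<forall>n. c n \<in> (UNIV::nat set)) \<and> (\<forall>n. 0 < r n) \<and> filterlim r at_top F"
  assume B: "cone_seq UNIV dK F c r x \<and> cone_seq UNIV dK F c r y \<and> cone_seq UNIV dK F c r z"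
  have U: "nonprincipal_ultrafilter F" and rpos: "\<And>n. 0 < r n" and rlim: "filterlim r at_top F"
    using A by auto
  have Fnb: "F \<noteq> bot" using U by (simp add: nonprincipal_ultrafilter_def)
  obtain Mx My Mz where
    Mx: "eventually (\<lambda>n. dK (x n) (c n) / r n \<le> Mx) F" and
    My: "eventually (\<lambda>n. dK (y n) (c n) / r n \<le> My) F" and
    Mz: "eventually (\<lambda>n. dK (z n) (c n) / r n \<le> Mz) F"
    using B unfolding cone_seq_def by blast
  have bnd: "eventually (\<lambda>n. 0 \<le> dK (u n) (v n) / r n \<and> dK (u n) (v n) / r n \<le> Mu + Mv) F"
    if Mu: "eventually (\<lambda>n. dK (u n) (c n) / r n \<le> Mu) F"
      and Mv: "eventually (\<lambda>n. dK (v n) (c n) / r n \<le> Mv) F" for u v Mu Mv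
    using eventually_conj[OF Mu Mv]
  proof (rule eventually_mono)
    fix n assume h: "dK (u n) (c n) / r n \<le> Mu \<and> dK (v n) (c n) / r n \<le> Mv"
    have "dK (u n) (v n) \<le> dK (u n) (c n) + dK (v n) (c n)"
      using dK_facts(3)[of "u n" "v n" "c n"] dK_facts(2)[of "c n" "v n"] by simp
    then have "dK (u n) (v n) / r n \<le> dK (u n) (c n) / r n + dK (v n) (c n) / r n"
      using rpos[of n] by (simp add: divide_right_mono add_divide_distrib[symmetric])
    then show "0 \<le> dK (u n) (v n) / r n \<and> dK (u n) (v n) / r n \<le> Mu + Mv"
      using h rpos[of n] dK_facts(1)[of "u n" "v n"] by simp
  qed
  obtain La where La: "((\<lambda>n. dK (x n) (y n) / r n) \<longlongrightarrow> La) F"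
    using ultra_conv[OF U bnd[OF Mx My]] by blast
  obtain Lb where Lb: "((\<lambda>n. dK (x n) (z n) / r n) \<longlongrightarrow> Lb) F"
    using ultra_conv[OF U bnd[OF Mx Mz]] by blast
  obtain Lc where Lc: "((\<lambda>n. dK (y n) (z n) / r n) \<longlongrightarrow> Lc) F"
    using ultra_conv[OF U bnd[OF My Mz]] by blast
  have l0: "((\<lambda>n. ln 2 / r n) \<longlongrightarrow> 0) F"
    by (rule tendsto_divide_0[OF tendsto_const filterlim_at_top_imp_at_infinity[OF rlim]])
  have lim2: "((\<lambda>n. max (dK (x n) (z n) / r n) (dK (y n) (z n) / r n) + ln 2 / r n) \<longlongrightarrow> max Lb Lc + 0) F"
    by (intro tendsto_add tendsto_max Lb Lc l0)
  have ev: "eventually (\<lambda>n. dK (x n) (y n) / r n \<le> max (dK (x n) (z n) / r n) (dK (y n) (z n) / r n) + ln 2 / r n) F"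
  proof (rule always_eventually, rule allI)
    fix n
    have "dK (x n) (y n) / r n \<le> (max (dK (x n) (z n)) (dK (y n) (z n)) + ln 2) / r n"
      using dK_quasi[of "x n" "y n" "z n"] rpos[of n] by (simp add: divide_right_mono)
    also have "\<dots> = max (dK (x n) (z n) / r n) (dK (y n) (z n) / r n) + ln 2 / r n"
      using rpos[of n] by (simp add: add_divide_distrib max_divide_distrib_right)
    finally show "dK (x n) (y n) / r n \<le> max (dK (x n) (z n) / r n) (dK (y n) (z n) / r n) + ln 2 / r n" .
  qed
  have "La \<le> max Lb Lc + 0" using tendsto_le[OF _ lim2 La ev] Fnb by simp
  moreover have "cone_dist dK F r x y = La" "cone_dist dK F r x z = Lb" "cone_dist dK F r y z = Lc"
    unfolding cone_dist_def using La Lb Lc Fnb by (auto intro: tendsto_Lim)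
  ultimately show "cone_dist dK F r x y \<le> max (cone_dist dK F r x z) (cone_dist dK F r y z)" by simp
qed



definition phi :: "nat \<Rightarrow> (nat \<Rightarrow> nat) \<Rightarrow> nat set" where
  "phi J x = (\<Union>i\<le>J. bitc J i ` {..<x i})"

lemma finite_phi: "finite (phi J x)"
  by (simp add: phi_def)

lemma mem_phi: "bitc J i t \<in> phi J x \<longleftrightarrow> i \<le> J \<and> t < x i"
  by (auto simp: phi_def bitc_inj)

lemma phi_elem: "e \<in> phi J x \<Longrightarrow> \<exists>i t. e = bitc J i t \<and> i \<le> J \<and> t < x i"
  by (auto simp: phi_def)

lemma nP_ge: "real (2*J*J+4*J+1) \<le> ln (1 + real (nP J))"
proof -
  have "exp (real (2*J*J+4*J+1)) \<le> real (nP J)" unfolding nP_def by (rule real_nat_ceiling_ge)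
  then have "exp (real (2*J*J+4*J+1)) \<le> 1 + real (nP J)" by simp
  then show ?thesis by (subst ln_ge_iff) auto
qed

lemma nP_pos: "0 < nP J"
proof -
  have "0 < exp (real (2*J*J+4*J+1))" by simp
  then show ?thesis unfolding nP_def by linarith
qed

lemma D1:
  assumes "\<And>i. i \<le> J \<Longrightarrow> x i \<le> nP J" "\<And>i. i \<le> J \<Longrightarrow> y i \<le> nP J"
    and "\<And>i. x i \<le> y i + 1" "\<And>i. y i \<le> x i + 1"
  shows "Nm (sd (phi J x) (phi J y)) < real (2*J+3)"
proof -
  define C where "C = sd (phi J x) (phi J y)"
  have sub: "C \<subseteq> (\<lambda>i. bitc J i (min (x i) (y i))) ` {..J}"
  proof
    fix e assume "e \<in> C"
    then consider "e \<in> phi J x" "e \<notin> phi J y" | "e \<in> phi J y" "e \<notin> phi J x" by (auto simp: C_def sd_def)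
    then show "e \<in> (\<lambda>i. bitc J i (min (x i) (y i))) ` {..J}"
    proof cases
      case 1
      then obtain i t where e: "e = bitc J i t" "i \<le> J" "t < x i" using phi_elem by blast
      then have "\<not> t < y i" using 1 mem_phi by blast
      then have "t = min (x i) (y i)" using e assms(3,4)[of i] by linarith
      then have "e = bitc J i (min (x i) (y i))" using e by simp
      then show ?thesis using e(2) by blast
    next
      case 2
      then obtain i t where e: "e = bitc J i t" "i \<le> J" "t < y i" using phi_elem by blast
      then have "\<not> t < x i" using 2 mem_phi by blast
      then have "t = min (x i) (y i)" using e assms(3,4)[of i] by linarith
      then have "e = bitc J i (min (x i) (y i))" using e by simp
      then show ?thesis using e(2) by blast
    qed
  qed
  have blkC: "blk e = J" if eC: "e \<in> C" for e
  proof -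
    obtain i where i: "i \<le> J" "e = bitc J i (min (x i) (y i))" using sub eC by auto
    have "min (x i) (y i) < nP J"
    proof -
      have "e \<in> phi J x \<or> e \<in> phi J y" using eC by (auto simp: C_def sd_def)
      then have "min (x i) (y i) < x i \<or> min (x i) (y i) < y i" using i mem_phi by blast
      then show ?thesis using assms(1,2)[OF i(1)] by linarith
    qed
    then show ?thesis using i blk_bit by simp
  qed
  have cardC: "card C \<le> Suc J"
    using card_mono[OF _ sub] card_image_le[of "{..J}" "\<lambda>i. bitc J i (min (x i) (y i))"] by simp
  have fC: "finite C" by (simp add: C_def finite_sd finite_phi)
  have "Nm C \<le> real J + 1 + ln (2 + real J)"
  proof (rule Nm_le[OF fC])
    show "0 \<le> real J + 1 + ln (2 + real J)" by simp
    fix J' show "fb C J' \<le> real J + 1 + ln (2 + real J)"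
    proof (cases "C \<inter> {e. blk e = J'} = {}")
      case True then show ?thesis by (simp add: fb_def)
    next
      case False
      then have JJ: "J' = J" using blkC by auto
      have "C \<inter> {e. blk e = J'} = C" using blkC JJ by auto
      then have "fb C J' = real J + 1 + ln (1 + real (card C))" using False JJ by (simp add: fb_def)
      also have "\<dots> \<le> real J + 1 + ln (2 + real J)" using cardC by simp
      finally show ?thesis .
    qed
  qed
  also have "\<dots> < real J + 1 + (2 + real J)" using ln_less_self[of "2 + real J"] by simp
  also have "\<dots> = real (2*J+3)" by simp
  finally show ?thesis by (simp add: C_def)
qed

lemma D2:
  assumes "j \<le> J" "x j = 0" "y j = nP J"
  shows "ln (1 + real (nP J)) \<le> Nm (sd (phi J x) (phi J y))"
proof -
  define C where "C = sd (phi J x) (phi J y)"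
  have sub: "bitc J j ` {..<nP J} \<subseteq> C \<inter> {e. blk e = J}"
  proof
    fix e assume "e \<in> bitc J j ` {..<nP J}"
    then obtain t where t: "t < nP J" "e = bitc J j t" by auto
    have "e \<in> phi J y" "e \<notin> phi J x" using t assms mem_phi by auto
    moreover have "blk e = J" using t blk_bit assms(1) by simp
    ultimately show "e \<in> C \<inter> {e. blk e = J}" by (auto simp: C_def sd_def)
  qed
  have fC: "finite C" by (simp add: C_def finite_sd finite_phi)
  have inj: "inj_on (bitc J j) {..<nP J}" by (auto simp: inj_on_def bitc_inj)
  have "nP J \<le> card (C \<inter> {e. blk e = J})"
    using card_mono[OF _ sub] fC card_image[OF inj] by simp
  moreover have ne: "C \<inter> {e. blk e = J} \<noteq> {}" using sub nP_pos[of J] by auto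
  ultimately have "ln (1 + real (nP J)) \<le> fb C J"
  proof -
    assume h: "nP J \<le> card (C \<inter> {e. blk e = J})"
    have "ln (1 + real (nP J)) \<le> ln (1 + real (card (C \<inter> {e. blk e = J})))" using h by simp
    moreover have "fb C J = real J + 1 + ln (1 + real (card (C \<inter> {e. blk e = J})))"
      using ne by (simp add: fb_def)
    ultimately show ?thesis by linarith
  qed
  also have "\<dots> \<le> Nm C" by (rule Nm_ge[OF fC])
  finally show ?thesis by (simp add: C_def)
qed

lemma chain_cons:
  assumes "s_chain d s U a b" "z \<in> U" "d z a < s"
  shows "s_chain d s U z b"
proof -
  obtain xs where xs: "xs \<noteq> []" "hd xs = a" "last xs = b" "set xs \<subseteq> U"
    "\<forall>i. Suc i < length xs \<longrightarrow> d (xs ! i) (xs ! Suc i) < s"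
    using assms(1) unfolding s_chain_def by blast
  show ?thesis unfolding s_chain_def
  proof (intro exI[of _ "z # xs"] conjI allI impI)
    fix i assume "Suc i < length (z # xs)"
    then show "d ((z # xs) ! i) ((z # xs) ! Suc i) < s"
      using xs assms(3) by (cases i) (auto simp: hd_conv_nth)
  qed (use xs assms(2) in auto)
qed

lemma chain_single: "a \<in> U \<Longrightarrow> s_chain d s U a a"
  unfolding s_chain_def by (intro exI[of _ "[a]"]) auto



lemma not_asdim: "\<not> asdim_AN_le (UNIV :: nat set) dK m"
proof
  assume "asdim_AN_le (UNIV :: nat set) dK m"
  then obtain C k where C: "C > 0" and H: "\<And>s. s > 0 \<Longrightarrow> \<exists>U :: nat \<Rightarrow> nat set.
     (\<forall>i\<le>m. U i \<subseteq> UNIV) \<and> (\<Union>i\<le>m. U i) = UNIV \<and>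
     (\<forall>i\<le>m. \<forall>x\<in>U i. \<forall>y\<in>U i. s_chain dK s (U i) x y \<longrightarrow> dK x y \<le> C * s + k)"
    unfolding asdim_AN_le_def by blast
  define J where "J = m + nat \<lceil>C\<rceil> + nat \<lceil>k\<rceil>"
  define s :: real where "s = real (2*J+3)"
  define p where "p = nP J"
  define n where "n = Suc J"
  have s0: "s > 0" by (simp add: s_def)
  obtain U :: "nat \<Rightarrow> nat set" where Ucov: "(\<Union>i\<le>m. U i) = UNIV"
    and Ub: "\<And>i x y. i \<le> m \<Longrightarrow> x \<in> U i \<Longrightarrow> y \<in> U i \<Longrightarrow> s_chain dK s (U i) x y \<Longrightarrow> dK x y \<le> C * s + k"
    using H[OF s0] by blast
  have CJ: "C \<le> real J" unfolding J_def by linarith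
  have kJ: "k \<le> real J" unfolding J_def by linarith
  have bound: "C * s + k < ln (1 + real p)"
  proof -
    have "C * s \<le> real J * s" using CJ s0 by (simp add: mult_right_mono)
    then have "C * s + k \<le> real J * s + real J" using kJ by simp
    also have "\<dots> = real (2*J*J+4*J)" by (simp add: s_def algebra_simps)
    also have "\<dots> < real (2*J*J+4*J+1)" by simp
    also have "\<dots> \<le> ln (1 + real p)" unfolding p_def by (rule nP_ge)
    finally show ?thesis .
  qed
  define Phi where "Phi x = set_encode (phi J x)" for x
  have dPhi: "dK (Phi x) (Phi y) = Nm (sd (phi J x) (phi J y))" for x y
    by (simp add: dK_def Phi_def finite_phi)
  define col where "col x = (LEAST i. Phi x \<in> U i)" for x
  have col: "col x \<le> m \<and> Phi x \<in> U (col x)" for x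
  proof -
    obtain i where i: "i \<le> m" "Phi x \<in> U i" using Ucov by blast
    have "Phi x \<in> U (col x)" unfolding col_def using i(2) by (rule LeastI)
    moreover have "col x \<le> i" unfolding col_def using i(2) by (rule Least_le)
    ultimately show ?thesis using i(1) by simp
  qed
  define good where "good x j \<longleftrightarrow> (\<exists>y. (\<forall>i. y i \<le> p) \<and> y j = p \<and> s_chain dK s (U (col x)) (Phi x) (Phi y))" for x j
  define lab :: "(nat \<Rightarrow> nat) \<Rightarrow> nat \<Rightarrow> nat" where "lab x j = (if good x j then 1 else 0)" for x j
  have p0: "0 < p" unfolding p_def by (rule nP_pos)
  have lab0: "\<forall>x j. (\<forall>j. x j \<le> p) \<and> j < n \<and> x j = 0 \<longrightarrow> lab x j = 0"
  proof (intro allI impI)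
    fix x j assume a: "(\<forall>j. x j \<le> p) \<and> j < n \<and> x j = 0"
    show "lab x j = 0"
    proof (rule ccontr)
      assume "lab x j \<noteq> 0"
      then obtain y where y: "y j = p" "s_chain dK s (U (col x)) (Phi x) (Phi y)"
        unfolding lab_def good_def by (auto split: if_splits)
      have "Phi y \<in> U (col x)" using y(2) unfolding s_chain_def by (metis last_in_set subsetD)
      then have "dK (Phi x) (Phi y) \<le> C * s + k" using Ub[of "col x"] col[of x] y(2) by blast
      moreover have "ln (1 + real p) \<le> dK (Phi x) (Phi y)"
        unfolding dPhi p_def using D2[of j J x y] a y(1) by (simp add: n_def p_def)
      ultimately show False using bound by linarith
    qed
  qed
  have lab1: "\<forall>x j. (\<forall>j. x j \<le> p) \<and> j < n \<and> x j = p \<longrightarrow> lab x j = 1"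
  proof (intro allI impI)
    fix x j assume a: "(\<forall>j. x j \<le> p) \<and> j < n \<and> x j = p"
    have "good x j" unfolding good_def
      using a col[of x] by (intro exI[of _ x]) (auto intro: chain_single)
    then show "lab x j = 1" by (simp add: lab_def)
  qed
  have "odd (card {S. ksimplex p n S \<and> (reduced n \<circ> lab) ` S = {..n}})"
    by (rule kuhn_combinatorial[OF p0 lab0 lab1])
  then have "{S. ksimplex p n S \<and> (reduced n \<circ> lab) ` S = {..n}} \<noteq> {}"
    by (metis card.empty odd_card_imp_not_empty)
  then obtain S where S: "ksimplex p n S" "(reduced n \<circ> lab) ` S = {..n}" by blast
  have cardS: "card S = Suc n" using S(1) by (rule ksimplex_card)
  have finS: "finite S" using cardS card_ge_0_finite by force
  have injS: "inj_on (reduced n \<circ> lab) S"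
    by (rule eq_card_imp_inj_on[OF finS]) (simp only: S(2) cardS card_atMost)
  obtain base upd where ks: "kuhn_simplex p n base upd S" using S(1) by (auto elim: ksimplex.cases)
  have notinj: "\<not> inj_on col S"
  proof
    assume "inj_on col S"
    then have "card S \<le> card {..m}" using col by (intro card_inj_on_le) auto
    then show False using cardS by (simp add: n_def J_def)
  qed
  then obtain u v where uv: "u \<in> S" "v \<in> S" "u \<noteq> v" "col u = col v"
    unfolding inj_on_def by blast
  have close: "dK (Phi a) (Phi b) < s" if ab: "a \<in> S" "b \<in> S" for a b
  proof -
    have "dK (Phi a) (Phi b) = Nm (sd (phi J a) (phi J b))" by (rule dPhi)
    also have "\<dots> < real (2*J+3)"
    proof (rule D1)
      fix i
      show "a i \<le> nP J" "b i \<le> nP J"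
        using kuhn_simplex.s_le_p[OF ks] ab by (auto simp: p_def)
      show "a i \<le> b i + 1" "b i \<le> a i + 1"
        using kuhn_simplex.base_le[OF ks] kuhn_simplex.le_Suc_base[OF ks] ab
        by (metis add.commute add_le_mono1 le_trans plus_1_eq_Suc)+
    qed
    finally show ?thesis by (simp add: s_def)
  qed
  have transfer: "good b j" if g: "good a j" and ab: "a \<in> S" "b \<in> S" "col a = col b" for a b j
  proof -
    obtain y where y: "\<forall>i. y i \<le> p" "y j = p" "s_chain dK s (U (col a)) (Phi a) (Phi y)"
      using g unfolding good_def by blast
    have "s_chain dK s (U (col b)) (Phi b) (Phi y)"
      using chain_cons[OF y(3), of "Phi b"] col[of b] close[OF ab(2,1)] ab(3) by simp
    then show ?thesis unfolding good_def using y by blast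
  qed
  have "lab u = lab v"
  proof
    fix j show "lab u j = lab v j"
      using transfer[of u j v] transfer[of v j u] uv by (auto simp: lab_def)
  qed
  then have "(reduced n \<circ> lab) u = (reduced n \<circ> lab) v" by simp
  then show False using injS uv unfolding inj_on_def by blast
qed

theorem corollary3p9:
  shows "\<exists>(K :: nat monoid) d. locally_finite_group K \<and> proper_left_invariant_metric K d \<and>
           asdim_AN_infinite (carrier K) d \<and> all_cones_ultrametric (carrier K) d"
proof (intro exI conjI)
  show "locally_finite_group Kgrp" by (rule locfin_K)
  show "proper_left_invariant_metric Kgrp dK" by (rule plim_K)
  show "asdim_AN_infinite (carrier Kgrp) dK"
    unfolding asdim_AN_infinite_def using not_asdim by simp
  show "all_cones_ultrametric (carrier Kgrp) dK" using cone_K by simp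
qed


end
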